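(* Let $F$ be a diagonal matching rule for $G$ and let $M$ be the prefix matching generated by $F$. If $M$ is a Morse matching, then $G$ is diagonal.
   Context: $G$ is a finite simple connected graph with shortest-path distance $d$; $\ell(x_0,\dots,x_k)=\sum_{i=0}^{k-1}d(x_i,x_{i+1})$. The magnitude chain complex $\mathrm{MC}_{k,l}(G)$ is the free abelian group on $I_{k,l}(G)=\{(x_0,\dots,x_k)\in V(G)^{k+1}:x_i\ne x_{i+1}\ \forall i,\ \ell=l\}$ with differential $\partial=\sum_{i=1}^{k-1}(-1)^i\partial_i$, where $\partial_i$ deletes $x_i$ if this does not change $\ell$ and is $0$ otherwise; $\mathrm{MH}_{k,l}(G)=H_k(\mathrm{MC}_{*,l}(G))$; $G$ is diagonal if $\mathrm{MH}_{k,l}(G)=0$ for $k\ne l$. Elements of $I_{k,l}(G)$ are called sequences. $\Gamma$ is the directed graph on sequences with an edge $a\to b$ whenever $\partial_i a=b\neq0$ for some $i$. A matching is a set of pairwise vertex-disjoint edges of $\Gamma$; $\Gamma^M$ is $\Gamma$ with edges of $M$ reversed; $M$ is Morse if $\Gamma^M$ has no directed cycle. Matching states: "unmatched", "insert$(i,v)$" (matched to $(x_0,\dots,x_i,v,x_{i+1},\dots,x_k)$), "delete$(i)$" (matched to $(x_0,\dots,\hat x_i,\dots,x_k)$). A prefix matching: whenever $(x_0,\dots,x_k)$ has state insert$(i,v)$ (resp. delete$(i)$), every sequence $(x_0,\dots,x_{i+1},y_{i+2},\dots,y_{k'})$ has the same state. A matching rule is a function $F$ from sequences to $\{\epsilon\}\cup\{\iota(v):v\in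 V(G)\}\cup\{\delta\}$; a prefix matching $M$ is generated by $F$ if for every sequence $(x_0,\dots,x_k)$, $k\ge1$, with unmatched prefix $(x_0,\dots,x_{k-1})$, its state is insert$(k-1,v)$ iff $F(x_0,\dots,x_k)=\iota(v)$ and delete$(k-1)$ iff $F(x_0,\dots,x_k)=\delta$. $F$ is valid if (1) $F(x_0,\dots,x_k)=\iota(v)$ implies $v\notin\{x_{k-1},x_k\}$, $d(x_{k-1},v)+d(v,x_k)=d(x_{k-1},x_k)$, $F(x_0,\dots,x_{k-1},v)=\epsilon$, $F(x_0,\dots,x_{k-1},v,x_k)=\delta$; (2) $F(x_0,\dots,x_k)=\delta$ implies $d(x_{k-2},x_{k-1})+d(x_{k-1},x_k)=d(x_{k-2},x_k)$ and $F(x_0,\dots,x_{k-2},x_k)=\iota(x_{k-1})$. A valid $F$ is diagonal if, w.r.t. the prefix matching it generates, $F(x_0,\dots,x_k)\ne\epsilon$ for every sequence with unmatched prefix $(x_0,\dots,x_{k-1})$ and $d(x_{k-1},x_k)\ge2$. *)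

theory Defs
  imports Main
begin

definition simple_graph :: "'a set \<Rightarrow> ('a \<Rightarrow> 'a \<Rightarrow> bool) \<Rightarrow> bool" where
  "simple_graph V E \<longleftrightarrow> finite V \<and> (\<forall>x y. E x y \<longrightarrow> x \<in> V \<and> y \<in> V)
     \<and> (\<forall>x y. E x y \<longrightarrow> E y x) \<and> (\<forall>x. \<not> E x x)"

definition is_walk :: "('a \<Rightarrow> 'a \<Rightarrow> bool) \<Rightarrow> 'a list \<Rightarrow> bool" where
  "is_walk E p \<longleftrightarrow> p \<noteq> [] \<and> (\<forall>i < length p - 1. E (p ! i) (p ! Suc i))"

definition connected_graph :: "'a set \<Rightarrow> ('a \<Rightarrow> 'a \<Rightarrow> bool) \<Rightarrow> bool" where
  "connected_graph V E \<longleftrightarrow> (\<forall>x\<in>V. \<forall>y\<in>V. \<exists>p. is_walk E p \<and> hd p = x \<and> last p = y)"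

definition gdist :: "('a \<Rightarrow> 'a \<Rightarrow> bool) \<Rightarrow> 'a \<Rightarrow> 'a \<Rightarrow> nat" where
  "gdist E x y = (LEAST n. \<exists>p. is_walk E p \<and> hd p = x \<and> last p = y \<and> length p = Suc n)"

text \<open>Length ell of a tuple (x_0,...,x_k), represented as a list of length k+1.\<close>
definition seq_len :: "('a \<Rightarrow> 'a \<Rightarrow> bool) \<Rightarrow> 'a list \<Rightarrow> nat" where
  "seq_len E xs = (\<Sum>i < length xs - 1. gdist E (xs ! i) (xs ! Suc i))"

definition is_seq :: "'a set \<Rightarrow> 'a list \<Rightarrow> bool" where
  "is_seq V xs \<longleftrightarrow> xs \<noteq> [] \<and> set xs \<subseteq> V \<and> (\<forall>i < length xs - 1. xs ! i \<noteq> xs ! Suc i)"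

definition Iseq :: "'a set \<Rightarrow> ('a \<Rightarrow> 'a \<Rightarrow> bool) \<Rightarrow> nat \<Rightarrow> nat \<Rightarrow> 'a list set" where
  "Iseq V E k l = {xs. is_seq V xs \<and> length xs = Suc k \<and> seq_len E xs = l}"

definition del_at :: "nat \<Rightarrow> 'a list \<Rightarrow> 'a list" where
  "del_at i xs = take i xs @ drop (Suc i) xs"

definition ins_at :: "nat \<Rightarrow> 'a \<Rightarrow> 'a list \<Rightarrow> 'a list" where
  "ins_at i v xs = take (Suc i) xs @ v # drop (Suc i) xs"

text \<open>The face \<open>\<partial>_i\<close> of a sequence of length k+1 is nonzero: 1 \<le> i \<le> k-1 and deleting
  x_i does not change the length.\<close>
definition face_ok :: "('a \<Rightarrow> 'a \<Rightarrow> bool) \<Rightarrow> nat \<Rightarrow> 'a list \<Rightarrow> bool" where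
  "face_ok E i xs \<longleftrightarrow> 1 \<le> i \<and> i < length xs - 1 \<and> seq_len E (del_at i xs) = seq_len E xs"

text \<open>Chains in MC_{k,l}: integer-valued functions supported on I_{k,l} (a finite set),
  i.e. elements of the free abelian group on I_{k,l}.\<close>
definition is_chain :: "'a set \<Rightarrow> ('a \<Rightarrow> 'a \<Rightarrow> bool) \<Rightarrow> nat \<Rightarrow> nat \<Rightarrow> ('a list \<Rightarrow> int) \<Rightarrow> bool" where
  "is_chain V E k l c \<longleftrightarrow> (\<forall>xs. c xs \<noteq> 0 \<longrightarrow> xs \<in> Iseq V E k l)"

definition bdry :: "'a set \<Rightarrow> ('a \<Rightarrow> 'a \<Rightarrow> bool) \<Rightarrow> nat \<Rightarrow> nat \<Rightarrow> ('a list \<Rightarrow> int) \<Rightarrow> ('a list \<Rightarrow> int)" where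
  "bdry V E k l c = (\<lambda>ys. \<Sum>xs\<in>Iseq V E k l. c xs *
      (\<Sum>i\<in>{1..<k}. if face_ok E i xs \<and> del_at i xs = ys then (-1) ^ i else 0))"

text \<open>MH_{k,l}(G) = H_k(MC_{*,l}(G)) = 0, i.e. every k-cycle is a boundary.\<close>
definition MH_vanishes :: "'a set \<Rightarrow> ('a \<Rightarrow> 'a \<Rightarrow> bool) \<Rightarrow> nat \<Rightarrow> nat \<Rightarrow> bool" where
  "MH_vanishes V E k l \<longleftrightarrow>
     (\<forall>c. is_chain V E k l c \<and> bdry V E k l c = (\<lambda>_. 0) \<longrightarrow>
        (\<exists>b. is_chain V E (Suc k) l b \<and> bdry V E (Suc k) l b = c))"

definition diagonal_graph :: "'a set \<Rightarrow> ('a \<Rightarrow> 'a \<Rightarrow> bool) \<Rightarrow> bool" where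
  "diagonal_graph V E \<longleftrightarrow> (\<forall>k l. k \<noteq> l \<longrightarrow> MH_vanishes V E k l)"

definition Gamma :: "'a set \<Rightarrow> ('a \<Rightarrow> 'a \<Rightarrow> bool) \<Rightarrow> ('a list \<times> 'a list) set" where
  "Gamma V E = {(a, del_at i a) | a i. is_seq V a \<and> face_ok E i a}"

definition is_matching :: "'a set \<Rightarrow> ('a \<Rightarrow> 'a \<Rightarrow> bool) \<Rightarrow> ('a list \<times> 'a list) set \<Rightarrow> bool" where
  "is_matching V E M \<longleftrightarrow> M \<subseteq> Gamma V E \<and>
     (\<forall>a b c d. (a, b) \<in> M \<and> (c, d) \<in> M \<and> (a, b) \<noteq> (c, d) \<longrightarrow> {a, b} \<inter> {c, d} = {})"

definition Gamma_M :: "'a set \<Rightarrow> ('a \<Rightarrow> 'a \<Rightarrow> bool) \<Rightarrow> ('a list \<times> 'a list) set \<Rightarrow> ('a list \<times> 'a list) set" where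
  "Gamma_M V E M = (Gamma V E - M) \<union> M\<inverse>"

definition morse_matching :: "'a set \<Rightarrow> ('a \<Rightarrow> 'a \<Rightarrow> bool) \<Rightarrow> ('a list \<times> 'a list) set \<Rightarrow> bool" where
  "morse_matching V E M \<longleftrightarrow> is_matching V E M \<and> acyclic (Gamma_M V E M)"

definition unmatched :: "('a list \<times> 'a list) set \<Rightarrow> 'a list \<Rightarrow> bool" where
  "unmatched M x \<longleftrightarrow> (\<forall>a b. (a, b) \<in> M \<longrightarrow> x \<noteq> a \<and> x \<noteq> b)"

definition st_insert :: "('a list \<times> 'a list) set \<Rightarrow> 'a list \<Rightarrow> nat \<Rightarrow> 'a \<Rightarrow> bool" where
  "st_insert M x i v \<longleftrightarrow> Suc i < length x \<and> (ins_at i v x, x) \<in> M"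

definition st_delete :: "('a list \<times> 'a list) set \<Rightarrow> 'a list \<Rightarrow> nat \<Rightarrow> bool" where
  "st_delete M x i \<longleftrightarrow> 1 \<le> i \<and> i < length x - 1 \<and> (x, del_at i x) \<in> M"

definition prefix_matching :: "'a set \<Rightarrow> ('a \<Rightarrow> 'a \<Rightarrow> bool) \<Rightarrow> ('a list \<times> 'a list) set \<Rightarrow> bool" where
  "prefix_matching V E M \<longleftrightarrow> is_matching V E M \<and>
     (\<forall>x. is_seq V x \<longrightarrow>
        (\<forall>i v. st_insert M x i v \<longrightarrow>
           (\<forall>y. is_seq V y \<and> take (i + 2) y = take (i + 2) x \<longrightarrow> st_insert M y i v)) \<and>
        (\<forall>i. st_delete M x i \<longrightarrow>
           (\<forall>y. is_seq V y \<and> take (i + 2) y = take (i + 2) x \<longrightarrow> st_delete M y i)))"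

datatype 'a rule_val = Eps | Iota 'a | Delta

definition generated_by :: "'a set \<Rightarrow> ('a list \<Rightarrow> 'a rule_val) \<Rightarrow> ('a list \<times> 'a list) set \<Rightarrow> bool" where
  "generated_by V F M \<longleftrightarrow>
     (\<forall>x. is_seq V x \<and> 2 \<le> length x \<and> unmatched M (butlast x) \<longrightarrow>
        (\<forall>v. st_insert M x (length x - 2) v \<longleftrightarrow> F x = Iota v) \<and>
        (st_delete M x (length x - 2) \<longleftrightarrow> F x = Delta))"

text \<open>For x = (x_0,...,x_k): last x = x_k, x ! (length x - 2) = x_{k-1},
  x ! (length x - 3) = x_{k-2}.\<close>
definition valid_rule :: "'a set \<Rightarrow> ('a \<Rightarrow> 'a \<Rightarrow> bool) \<Rightarrow> ('a list \<Rightarrow> 'a rule_val) \<Rightarrow> bool" where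
  "valid_rule V E F \<longleftrightarrow>
     (\<forall>x. is_seq V x \<and> 2 \<le> length x \<longrightarrow>
        (\<forall>v. F x = Iota v \<longrightarrow>
           v \<in> V \<and> v \<noteq> x ! (length x - 2) \<and> v \<noteq> last x \<and>
           gdist E (x ! (length x - 2)) v + gdist E v (last x) = gdist E (x ! (length x - 2)) (last x) \<and>
           F (butlast x @ [v]) = Eps \<and>
           F (butlast x @ [v, last x]) = Delta) \<and>
        (F x = Delta \<longrightarrow>
           3 \<le> length x \<and>
           gdist E (x ! (length x - 3)) (x ! (length x - 2)) + gdist E (x ! (length x - 2)) (last x)
             = gdist E (x ! (length x - 3)) (last x) \<and>
           F (butlast (butlast x) @ [last x]) = Iota (x ! (length x - 2))))"

definition diagonal_rule :: "'a set \<Rightarrow> ('a \<Rightarrow> 'a \<Rightarrow> bool) \<Rightarrow> ('a list \<Rightarrow> 'a rule_val) \<Rightarrow> ('a list \<times> 'a list) set \<Rightarrow> bool" where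
  "diagonal_rule V E F M \<longleftrightarrow> valid_rule V E F \<and>
     (\<forall>x. is_seq V x \<and> 2 \<le> length x \<and> unmatched M (butlast x) \<and>
          2 \<le> gdist E (x ! (length x - 2)) (last x) \<longrightarrow> F x \<noteq> Eps)"

end

theory Submission imports Defs begin

lemma is_walk_succ: "is_walk E p \<longleftrightarrow> p \<noteq> [] \<and> successively E p"
  unfolding is_walk_def successively_conv_nth by (cases p) auto

lemma is_seq_succ: "is_seq V xs \<longleftrightarrow> xs \<noteq> [] \<and> set xs \<subseteq> V \<and> successively (\<noteq>) xs"
  unfolding is_seq_def successively_conv_nth by (cases xs) auto

fun sl :: "('a \<Rightarrow> 'a \<Rightarrow> bool) \<Rightarrow> 'a list \<Rightarrow> nat" where
  "sl E (x # y # zs) = gdist E x y + sl E (y # zs)"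
| "sl E _ = 0"

lemma seq_len_sl: "seq_len E xs = sl E xs"
proof (induction E xs rule: sl.induct)
  case (1 E x y zs)
  have "seq_len E (x # y # zs) = (\<Sum>i<Suc (length zs). gdist E ((x#y#zs) ! i) ((x#y#zs) ! Suc i))"
    by (simp add: seq_len_def)
  also have "\<dots> = gdist E x y + (\<Sum>i<length zs. gdist E ((y#zs) ! i) ((y#zs) ! Suc i))"
    by (subst sum.lessThan_Suc_shift) simp
  also have "\<dots> = gdist E x y + seq_len E (y # zs)" by (simp add: seq_len_def)
  finally show ?case using 1 by simp
qed (auto simp: seq_len_def)

lemma nth_del_at: "i < length xs \<Longrightarrow> n < length xs - 1 \<Longrightarrow>
   del_at i xs ! n = (if n < i then xs ! n else xs ! Suc n)"
  unfolding del_at_def by (auto simp: nth_append min_def)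

lemma length_del_at[simp]: "i < length xs \<Longrightarrow> length (del_at i xs) = length xs - 1"
  unfolding del_at_def by auto

lemma set_del_at: "set (del_at i xs) \<subseteq> set xs"
  unfolding del_at_def by (auto dest: in_set_takeD in_set_dropD)

lemma del_at_Cons: "0 < i \<Longrightarrow> del_at i (x # xs) = x # del_at (i - 1) xs"
  unfolding del_at_def by (cases i) auto

lemma del_del: "i < j \<Longrightarrow> j < length xs \<Longrightarrow> del_at i (del_at j xs) = del_at (j - 1) (del_at i xs)"
  by (rule nth_equalityI) (auto simp: nth_del_at)

lemma del_at_inj: "successively (\<noteq>) a \<Longrightarrow> i < length a \<Longrightarrow> j < length a \<Longrightarrow> del_at i a = del_at j a \<Longrightarrow> i = j"
proof (rule ccontr)
  assume s: "successively (\<noteq>) a" and l: "i < length a" "j < length a" and e: "del_at i a = del_at j a" and ne: "i \<noteq> j"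
  { fix i j assume ij: "i < j" "j < length a" "del_at i a = del_at j a"
    then have "del_at i a ! i = del_at j a ! i" by simp
    then have "a ! Suc i = a ! i" using ij nth_del_at[of i a i] nth_del_at[of j a i] by simp
    moreover have "a ! i \<noteq> a ! Suc i" using successively_nth[OF s, of i] ij by simp
    ultimately have False by simp }
  then show False using l e ne by (metis linorder_neqE_nat)
qed


locale G =
  fixes V :: "'a set" and E :: "'a \<Rightarrow> 'a \<Rightarrow> bool"
  assumes sg: "simple_graph V E" and cg: "connected_graph V E"
begin

lemma gdist_refl[simp]: "gdist E x x = 0"
  unfolding gdist_def by (rule Least_eq_0) (rule exI[of _ "[x]"], simp add: is_walk_def)

lemma gdist_walk: assumes "x \<in> V" "y \<in> V"
  shows "\<exists>p. is_walk E p \<and> hd p = x \<and> last p = y \<and> length p = Suc (gdist E x y)"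
proof -
  obtain p where p: "is_walk E p" "hd p = x" "last p = y" using cg assms unfolding connected_graph_def by blast
  then have "\<exists>n. \<exists>p. is_walk E p \<and> hd p = x \<and> last p = y \<and> length p = Suc n"
    by (intro exI[of _ "length p - 1"] exI[of _ p]) (auto simp: is_walk_def)
  from LeastI_ex[OF this] show ?thesis unfolding gdist_def .
qed

lemma gdist_pos: assumes "x \<in> V" "y \<in> V" "x \<noteq> y" shows "1 \<le> gdist E x y"
proof (rule ccontr)
  assume "\<not> 1 \<le> gdist E x y"
  then have "gdist E x y = 0" by simp
  with gdist_walk[OF assms(1,2)] obtain p where "hd p = x" "last p = y" "length p = 1" by auto
  then show False using assms(3) by (cases p) auto
qed

lemma gdist_tri: assumes "x \<in> V" "y \<in> V" "z \<in> V"
  shows "gdist E x z \<le> gdist E x y + gdist E y z"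
proof -
  obtain p where p: "is_walk E p" "hd p = x" "last p = y" "length p = Suc (gdist E x y)"
    using gdist_walk[OF assms(1,2)] by blast
  obtain q where q: "is_walk E q" "hd q = y" "last q = z" "length q = Suc (gdist E y z)"
    using gdist_walk[OF assms(2,3)] by blast
  obtain q' where q': "q = y # q'" using q by (cases q) (auto simp: is_walk_def)
  have w: "is_walk E (p @ q')" using p q q'
    by (auto simp: is_walk_succ successively_append_iff successively_Cons)
  have "hd (p @ q') = x" using p by (auto simp: is_walk_def)
  moreover have "last (p @ q') = z" using p q q' by (cases "q' = []") (auto simp: is_walk_def)
  moreover have "length (p @ q') = Suc (gdist E x y + gdist E y z)" using p q q' by simp
  ultimately show ?thesis unfolding gdist_def using w by (intro Least_le) blast
qed

lemma sl_del: "set xs \<subseteq> V \<Longrightarrow> 1 \<le> i \<Longrightarrow> i < length xs - 1 \<Longrightarrow>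
  sl E xs + gdist E (xs ! (i - 1)) (xs ! Suc i) =
  sl E (del_at i xs) + gdist E (xs ! (i - 1)) (xs ! i) + gdist E (xs ! i) (xs ! Suc i)"
proof (induction xs arbitrary: i)
  case Nil then show ?case by simp
next
  case (Cons x ys)
  show ?case
  proof (cases "i = 1")
    case True
    then obtain y z rest where ys: "ys = y # z # rest" using Cons.prems
      by (cases ys; cases "tl ys") auto
    show ?thesis using True by (simp add: ys del_at_def)
  next
    case False
    then have i: "i \<ge> 2" using Cons.prems by simp
    then obtain y ys' where ys: "ys = y # ys'" using Cons.prems by (cases ys) auto
    have d1: "del_at i (x # ys) = x # del_at (i - 1) ys" using i by (simp add: del_at_Cons)
    have d2: "del_at (i - 1) ys = y # del_at (i - 1 - 1) ys'" using i ys
      by (simp add: del_at_Cons)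
    have IH: "sl E ys + gdist E (ys ! (i - 1 - 1)) (ys ! Suc (i - 1)) =
      sl E (del_at (i - 1) ys) + gdist E (ys ! (i - 1 - 1)) (ys ! (i - 1)) + gdist E (ys ! (i - 1)) (ys ! Suc (i - 1))"
      using Cons.prems i by (intro Cons.IH) auto
    have e1: "(x # ys) ! (i - 1) = ys ! (i - 1 - 1)" using i by (cases i) auto
    have e2: "(x # ys) ! i = ys ! (i - 1)" using i by (cases i) auto
    have e3: "(x # ys) ! Suc i = ys ! Suc (i - 1)" using i by (cases i) auto
    show ?thesis using IH unfolding d1 e1 e2 e3 d2 by (simp add: ys)
  qed
qed

lemma sl_del_le: assumes "set xs \<subseteq> V" "1 \<le> i" "i < length xs - 1"
  shows "sl E (del_at i xs) \<le> sl E xs"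
proof -
  have "xs ! (i - 1) \<in> V" "xs ! i \<in> V" "xs ! Suc i \<in> V" using assms by auto
  then have "gdist E (xs ! (i - 1)) (xs ! Suc i) \<le> gdist E (xs ! (i - 1)) (xs ! i) + gdist E (xs ! i) (xs ! Suc i)"
    by (rule gdist_tri)
  then show ?thesis using sl_del[OF assms] by linarith
qed

lemma del_seq: assumes s: "is_seq V xs" and f: "face_ok E i xs" shows "is_seq V (del_at i xs)"
proof -
  have i: "1 \<le> i" "i < length xs - 1" and L: "sl E (del_at i xs) = sl E xs"
    using f by (auto simp: face_ok_def seq_len_sl)
  have sv: "set xs \<subseteq> V" and su: "successively (\<noteq>) xs" using s by (auto simp: is_seq_succ)
  have V3: "xs ! (i - 1) \<in> V" "xs ! i \<in> V" "xs ! Suc i \<in> V" using sv i by auto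
  have "xs ! (i - 1) \<noteq> xs ! i" using successively_nth[OF su, of "i - 1"] i by simp
  then have "1 \<le> gdist E (xs ! (i - 1)) (xs ! i)" using gdist_pos V3 by blast
  then have "1 \<le> gdist E (xs ! (i - 1)) (xs ! Suc i)" using sl_del[OF sv i] L by linarith
  then have ne: "xs ! (i - 1) \<noteq> xs ! Suc i" by (metis gdist_refl not_one_le_zero)
  have s1: "successively (\<noteq>) (take i xs)" using su
    by (metis append_take_drop_id successively_append_iff)
  have s2: "successively (\<noteq>) (drop (Suc i) xs)" using su
    by (metis append_take_drop_id successively_append_iff)
  have l: "last (take i xs) = xs ! (i - 1)" using i by (subst last_conv_nth) auto
  have h: "hd (drop (Suc i) xs) = xs ! Suc i" using i by (simp add: hd_drop_conv_nth)
  have "successively (\<noteq>) (del_at i xs)" unfolding del_at_def successively_append_iff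
    using s1 s2 l h ne by auto
  moreover have "del_at i xs \<noteq> []" 
  proof -
    have "length (del_at i xs) = length xs - 1" using i by simp
    then have "length (del_at i xs) > 0" using i by linarith
    then show ?thesis by auto
  qed
  moreover have "set (del_at i xs) \<subseteq> V" using set_del_at[of i xs] sv by (rule subset_trans)
  ultimately show ?thesis by (simp add: is_seq_succ)
qed

end


lemma involution_sum_zero:
  fixes f :: "'b \<Rightarrow> int"
  assumes "\<And>p. p \<in> T \<Longrightarrow> h p \<in> T" "\<And>p. p \<in> T \<Longrightarrow> h (h p) = p"
    "\<And>p. p \<in> T \<Longrightarrow> f (h p) = - f p"
  shows "sum f T = 0"
proof -
  have "sum (\<lambda>p. - f p) T = sum f T"
    by (rule sum.reindex_bij_witness[of T h h]) (use assms in auto)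
  then show ?thesis by (simp add: sum_negf)
qed

context G begin

lemma seq_del_le: "set xs \<subseteq> V \<Longrightarrow> 1 \<le> i \<Longrightarrow> i < length xs - 1 \<Longrightarrow> seq_len E (del_at i xs) \<le> seq_len E xs"
  unfolding seq_len_sl by (rule sl_del_le)

definition ff :: "'a list \<Rightarrow> 'a list \<Rightarrow> nat \<times> nat \<Rightarrow> int" where
  "ff xs zs p = (if face_ok E (fst p) xs \<and> face_ok E (snd p) (del_at (fst p) xs)
       \<and> del_at (snd p) (del_at (fst p) xs) = zs then (-1) ^ (fst p + snd p) else 0)"

lemma ff_key: assumes V: "set xs \<subseteq> V" and ij: "1 \<le> i" "i < j"
  shows "ff xs zs (i, j - 1) = - ff xs zs (j, i)"
proof (cases "j < length xs - 1")
  case False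
  then have "\<not> face_ok E j xs" by (simp add: face_ok_def)
  moreover have "\<not> face_ok E (j - 1) (del_at i xs)" if "face_ok E i xs"
    using that False ij by (auto simp: face_ok_def)
  ultimately show ?thesis by (auto simp: ff_def)
next
  case True
  let ?n = "length xs"
  have dd: "del_at i (del_at j xs) = del_at (j - 1) (del_at i xs)"
    using ij True by (intro del_del) auto
  let ?d = "del_at i (del_at j xs)"
  have Vj: "set (del_at j xs) \<subseteq> V" "set (del_at i xs) \<subseteq> V"
    using V set_del_at by (metis subset_trans)+
  have lj: "length (del_at j xs) = ?n - 1" "length (del_at i xs) = ?n - 1" using True ij by auto
  have a1: "seq_len E (del_at j xs) \<le> seq_len E xs" using seq_del_le[OF V] ij True by auto
  have a2: "seq_len E ?d \<le> seq_len E (del_at j xs)" using seq_del_le[OF Vj(1), of i] ij True lj by auto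
  have a3: "seq_len E (del_at i xs) \<le> seq_len E xs" using seq_del_le[OF V, of i] ij True by auto
  have a4: "seq_len E ?d \<le> seq_len E (del_at i xs)" unfolding dd
    using seq_del_le[OF Vj(2), of "j - 1"] ij True lj by auto
  have c1: "face_ok E j xs \<and> face_ok E i (del_at j xs) \<longleftrightarrow> seq_len E ?d = seq_len E xs"
    using a1 a2 ij True lj by (auto simp: face_ok_def)
  have c2: "face_ok E i xs \<and> face_ok E (j - 1) (del_at i xs) \<longleftrightarrow> seq_len E ?d = seq_len E xs"
    using a3 a4 ij True lj unfolding dd by (auto simp: face_ok_def)
  obtain j' where j': "j = Suc j'" using ij by (cases j) auto
  have sg: "((-1::int) ^ (i + (j - 1))) = - ((-1) ^ (j + i))" using j' by (simp add: add.commute)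
  show ?thesis unfolding ff_def fst_conv snd_conv using c1 c2 dd sg by auto
qed

lemma ff_sum_zero: assumes V: "set xs \<subseteq> V"
  shows "(\<Sum>p\<in>{1..<Suc k} \<times> {1..<k}. ff xs zs p) = 0"
proof (rule involution_sum_zero[where h = "\<lambda>(j, i). if i < j then (i, j - 1) else (i + 1, j)"])
  fix p assume p: "p \<in> {1..<Suc k} \<times> {1..<k}"
  obtain j i where ji: "p = (j, i)" by (cases p)
  show "(case p of (j, i) \<Rightarrow> if i < j then (i, j - 1) else (i + 1, j)) \<in> {1..<Suc k} \<times> {1..<k}"
    using p ji by auto
  show "(case (case p of (j, i) \<Rightarrow> if i < j then (i, j - 1) else (i + 1, j)) of
          (j, i) \<Rightarrow> if i < j then (i, j - 1) else (i + 1, j)) = p"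
    using p ji by auto
  show "ff xs zs (case p of (j, i) \<Rightarrow> if i < j then (i, j - 1) else (i + 1, j)) = - ff xs zs p"
  proof (cases "i < j")
    case True
    then show ?thesis using ji p ff_key[OF V, of i j zs] by auto
  next
    case False
    then have "ff xs zs (j, i + 1 - 1) = - ff xs zs (i + 1, j)"
      using ji p by (intro ff_key[OF V]) auto
    then show ?thesis using ji False by auto
  qed
qed

end


definition coef :: "('a \<Rightarrow> 'a \<Rightarrow> bool) \<Rightarrow> nat \<Rightarrow> 'a list \<Rightarrow> 'a list \<Rightarrow> int" where
  "coef E k xs ys = (\<Sum>i\<in>{1..<k}. if face_ok E i xs \<and> del_at i xs = ys then (-1) ^ i else 0)"

lemma bdry_coef: "bdry V E k l c = (\<lambda>ys. \<Sum>xs\<in>Iseq V E k l. c xs * coef E k xs ys)"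
  unfolding bdry_def coef_def by simp

context G begin

lemma finite_Iseq: "finite (Iseq V E k l)"
proof -
  have "finite V" using sg by (simp add: simple_graph_def)
  then have "finite {xs. set xs \<subseteq> V \<and> length xs = Suc k}" by (rule finite_lists_length_eq)
  moreover have "Iseq V E k l \<subseteq> {xs. set xs \<subseteq> V \<and> length xs = Suc k}"
    by (auto simp: Iseq_def is_seq_def)
  ultimately show ?thesis by (rule finite_subset[rotated])
qed

lemma del_Iseq: "xs \<in> Iseq V E (Suc k) l \<Longrightarrow> face_ok E i xs \<Longrightarrow> del_at i xs \<in> Iseq V E k l"
  using del_seq by (auto simp: Iseq_def face_ok_def)

lemma coef_nz: "coef E k xs ys \<noteq> 0 \<Longrightarrow> \<exists>i. face_ok E i xs \<and> del_at i xs = ys"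
  unfolding coef_def by (rule ccontr) (auto intro: sum.neutral)

lemma coef_face: assumes "is_seq V xs" "length xs = Suc k" "face_ok E i xs"
  shows "coef E k xs (del_at i xs) = (-1) ^ i"
proof -
  have su: "successively (\<noteq>) xs" using assms(1) by (simp add: is_seq_succ)
  have i: "i \<in> {1..<k}" using assms by (auto simp: face_ok_def)
  have "coef E k xs (del_at i xs) = (\<Sum>i'\<in>{1..<k}. if i' = i then (-1) ^ i else 0)"
    unfolding coef_def
  proof (rule sum.cong[OF refl])
    fix i' assume i': "i' \<in> {1..<k}"
    have "del_at i' xs = del_at i xs \<Longrightarrow> i' = i"
      using del_at_inj[OF su, of i' i] i i' assms(2) by auto
    then show "(if face_ok E i' xs \<and> del_at i' xs = del_at i xs then (-1) ^ i' else 0) =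
      (if i' = i then (-1) ^ i else (0::int))" using assms(3) by auto
  qed
  also have "\<dots> = (-1) ^ i" using i by simp
  finally show ?thesis .
qed

lemma inner_zero: assumes xs: "xs \<in> Iseq V E (Suc k) l"
  shows "(\<Sum>ys\<in>Iseq V E k l. coef E (Suc k) xs ys * coef E k ys zs) = 0"
proof -
  have V: "set xs \<subseteq> V" using xs by (auto simp: Iseq_def is_seq_def)
  have "(\<Sum>ys\<in>Iseq V E k l. coef E (Suc k) xs ys * coef E k ys zs)
    = (\<Sum>ys\<in>Iseq V E k l. \<Sum>j\<in>{1..<Suc k}. if ys = del_at j xs then
        (if face_ok E j xs then (-1) ^ j * coef E k ys zs else 0) else 0)"
    unfolding coef_def[of E "Suc k"] sum_distrib_right
    by (intro sum.cong refl) auto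
  also have "\<dots> = (\<Sum>j\<in>{1..<Suc k}. \<Sum>ys\<in>Iseq V E k l. if ys = del_at j xs then
        (if face_ok E j xs then (-1) ^ j * coef E k ys zs else 0) else 0)"
    by (rule sum.swap)
  also have "\<dots> = (\<Sum>j\<in>{1..<Suc k}. if face_ok E j xs then (-1) ^ j * coef E k (del_at j xs) zs else 0)"
  proof (rule sum.cong[OF refl])
    fix j
    show "(\<Sum>ys\<in>Iseq V E k l. if ys = del_at j xs then
        (if face_ok E j xs then (-1) ^ j * coef E k ys zs else 0) else 0) =
      (if face_ok E j xs then (-1) ^ j * coef E k (del_at j xs) zs else 0)"
      using del_Iseq[OF xs, of j] finite_Iseq by (simp add: sum.delta')
  qed
  also have "\<dots> = (\<Sum>j\<in>{1..<Suc k}. \<Sum>i\<in>{1..<k}. ff xs zs (j, i))"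
  proof (rule sum.cong[OF refl])
    fix j
    show "(if face_ok E j xs then (-1) ^ j * coef E k (del_at j xs) zs else 0) =
      (\<Sum>i\<in>{1..<k}. ff xs zs (j, i))"
      unfolding coef_def ff_def fst_conv snd_conv sum_distrib_left
      by (cases "face_ok E j xs") (auto intro!: sum.cong simp: power_add)
  qed
  also have "\<dots> = (\<Sum>p\<in>{1..<Suc k} \<times> {1..<k}. ff xs zs p)"
    by (simp add: sum.cartesian_product)
  also have "\<dots> = 0" by (rule ff_sum_zero[OF V])
  finally show ?thesis .
qed

lemma dd_zero: "bdry V E k l (bdry V E (Suc k) l b) = (\<lambda>_. 0)"
proof
  fix zs
  have "bdry V E k l (bdry V E (Suc k) l b) zs =
    (\<Sum>ys\<in>Iseq V E k l. \<Sum>xs\<in>Iseq V E (Suc k) l. b xs * (coef E (Suc k) xs ys * coef E k ys zs))"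
    unfolding bdry_coef sum_distrib_right by (simp add: mult.assoc)
  also have "\<dots> = (\<Sum>xs\<in>Iseq V E (Suc k) l. b xs * (\<Sum>ys\<in>Iseq V E k l. coef E (Suc k) xs ys * coef E k ys zs))"
    by (subst sum.swap) (simp add: sum_distrib_left)
  also have "\<dots> = 0" by (simp add: inner_zero)
  finally show "bdry V E k l (bdry V E (Suc k) l b) zs = 0" .
qed

end


lemma ins_del: "1 \<le> i \<Longrightarrow> i < length a \<Longrightarrow> ins_at (i - 1) (a ! i) (del_at i a) = a"
  unfolding ins_at_def del_at_def by (simp add: min_def id_take_nth_drop[symmetric])

lemma sl_snoc: "xs \<noteq> [] \<Longrightarrow> sl E (xs @ [y]) = sl E xs + gdist E (last xs) y"
proof (induction xs)
  case (Cons x xs)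
  then show ?case by (cases xs) auto
qed simp

lemma min_elem:
  assumes "finite D" "D \<noteq> {}" "acyclic Gr"
  shows "\<exists>a\<in>D. \<forall>y\<in>D. (y, a) \<notin> Gr\<^sup>+"
proof -
  let ?R = "Gr\<^sup>+ \<inter> D \<times> D"
  have "finite ?R" using assms(1) by (simp add: finite_subset[of _ "D \<times> D"])
  moreover have "acyclic ?R"
  proof -
    have "?R\<^sup>+ \<subseteq> (Gr\<^sup>+)\<^sup>+"
    proof (rule subrelI)
      fix a b assume "(a, b) \<in> ?R\<^sup>+"
      then show "(a, b) \<in> (Gr\<^sup>+)\<^sup>+" by (rule trancl_mono) auto
    qed
    then show ?thesis using assms(3) unfolding acyclic_def by auto
  qed
  ultimately have "wf ?R" by (rule finite_acyclic_wf)
  from assms(2) obtain x where "x \<in> D" by blast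
  from wfE_min[OF \<open>wf ?R\<close> this] obtain a where "a \<in> D" "\<And>y. (y, a) \<in> ?R \<Longrightarrow> y \<notin> D" by blast
  then show ?thesis by blast
qed

context G begin

lemma bdry_add_single: assumes "p \<in> Iseq V E j l"
  shows "bdry V E j l (\<lambda>x. f x + (if x = p then t else 0)) ys = bdry V E j l f ys + t * coef E j p ys"
  using assms finite_Iseq unfolding bdry_coef
  by (simp add: distrib_right sum.distrib if_distrib[where f = "\<lambda>z. z * _"] sum.delta cong: if_cong)

lemma bdry_diff: "bdry V E j l (\<lambda>x. f x - g x) = (\<lambda>y. bdry V E j l f y - bdry V E j l g y)"
  unfolding bdry_coef by (simp add: left_diff_distrib sum_subtractf)

lemma bdry_zero: "bdry V E j l (\<lambda>_. 0) = (\<lambda>_. 0)"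
  unfolding bdry_coef by simp

lemma bdry_supp: "bdry V E (Suc k) l b y \<noteq> 0 \<Longrightarrow> y \<in> Iseq V E k l"
proof -
  assume "bdry V E (Suc k) l b y \<noteq> 0"
  then obtain xs where xs: "xs \<in> Iseq V E (Suc k) l" "b xs * coef E (Suc k) xs y \<noteq> 0"
    unfolding bdry_coef by (meson sum.not_neutral_contains_not_neutral)
  then obtain i where "face_ok E i xs" "del_at i xs = y" using coef_nz by (metis mult_zero_right)
  then show ?thesis using del_Iseq[OF xs(1)] by blast
qed

lemma butlast_seq: "is_seq V x \<Longrightarrow> 2 \<le> length x \<Longrightarrow> is_seq V (butlast x)"
proof -
  assume s: "is_seq V x" "2 \<le> length x"
  then have x: "x = butlast x @ [last x]" by (metis append_butlast_last_id list.size(3) not_numeral_le_zero)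
  have "successively (\<noteq>) (butlast x)" using s(1) x unfolding is_seq_succ
    by (metis successively_append_iff)
  moreover have "butlast x \<noteq> []" using s(2) by (cases x) auto
  moreover have "set (butlast x) \<subseteq> V" using s(1) by (auto simp: is_seq_def dest: in_set_butlastD)
  ultimately show ?thesis by (simp add: is_seq_succ)
qed

end

locale Morse = G +
  fixes F :: "'a list \<Rightarrow> 'a rule_val" and M :: "('a list \<times> 'a list) set"
  assumes dr: "diagonal_rule V E F M" and pm: "prefix_matching V E M"
    and gb: "generated_by V F M" and mm: "morse_matching V E M"
begin

lemma M_Gamma: "(a, b) \<in> M \<Longrightarrow> \<exists>i. is_seq V a \<and> face_ok E i a \<and> b = del_at i a"
  using mm unfolding morse_matching_def is_matching_def Gamma_def by blast

lemma M_disj: "(a, b) \<in> M \<Longrightarrow> (c, d) \<in> M \<Longrightarrow> (a, b) \<noteq> (c, d) \<Longrightarrow> {a, b} \<inter> {c, d} = {}"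
  using mm unfolding morse_matching_def is_matching_def by blast

lemma crit_prefix: assumes s: "is_seq V x" "2 \<le> length x" and u: "unmatched M x"
  shows "unmatched M (butlast x)"
proof (rule ccontr)
  let ?p = "butlast x"
  have ps: "is_seq V ?p" using butlast_seq s by blast
  assume "\<not> unmatched M ?p"
  then obtain a b where ab: "(a, b) \<in> M" "?p = a \<or> ?p = b" unfolding unmatched_def by blast
  have pres: "\<forall>x. is_seq V x \<longrightarrow>
        (\<forall>i v. st_insert M x i v \<longrightarrow>
           (\<forall>y. is_seq V y \<and> take (i + 2) y = take (i + 2) x \<longrightarrow> st_insert M y i v)) \<and>
        (\<forall>i. st_delete M x i \<longrightarrow>
           (\<forall>y. is_seq V y \<and> take (i + 2) y = take (i + 2) x \<longrightarrow> st_delete M y i))"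
    using pm unfolding prefix_matching_def by blast
  show False
  proof (cases "?p = a")
    case True
    obtain i where i: "face_ok E i a" "b = del_at i a" using M_Gamma[OF ab(1)] by blast
    have "st_delete M ?p i" using i ab(1) True by (auto simp: st_delete_def face_ok_def)
    moreover have "take (i + 2) x = take (i + 2) ?p" using i True s
      by (auto simp: face_ok_def take_butlast)
    ultimately have "st_delete M x i" using pres ps s(1) by metis
    then show False using u by (auto simp: st_delete_def unmatched_def)
  next
    case False
    then have pb: "?p = b" using ab by blast
    obtain i where i: "is_seq V a" "face_ok E i a" "b = del_at i a" using M_Gamma[OF ab(1)] by blast
    have li: "1 \<le> i" "i < length a - 1" using i by (auto simp: face_ok_def)
    have la: "length b = length a - 1" using li i by simp
    have "ins_at (i - 1) (a ! i) b = a" using ins_del[of i a] li i(3) by simp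
    then have "st_insert M ?p (i - 1) (a ! i)" using ab(1) pb li la by (auto simp: st_insert_def)
    moreover have "take (i - 1 + 2) x = take (i - 1 + 2) ?p" using li la pb s
      by (auto simp: take_butlast)
    ultimately have "st_insert M x (i - 1) (a ! i)" using pres ps s(1) by metis
    then show False using u by (auto simp: st_insert_def unmatched_def)
  qed
qed

lemma crit_last: assumes s: "is_seq V x" "2 \<le> length x" and u: "unmatched M x"
  shows "gdist E (x ! (length x - 2)) (last x) = 1"
proof -
  have ub: "unmatched M (butlast x)" using crit_prefix[OF s u] .
  have G: "(\<forall>v. st_insert M x (length x - 2) v \<longleftrightarrow> F x = Iota v) \<and>
        (st_delete M x (length x - 2) \<longleftrightarrow> F x = Delta)"
    using gb s ub unfolding generated_by_def by blast
  have "F x = Eps"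
  proof (cases "F x")
    case (Iota v)
    then have "st_insert M x (length x - 2) v" using G by blast
    then show ?thesis using u by (auto simp: st_insert_def unmatched_def)
  next
    case Delta
    then have "st_delete M x (length x - 2)" using G by blast
    then show ?thesis using u by (auto simp: st_delete_def unmatched_def)
  qed simp
  then have "\<not> 2 \<le> gdist E (x ! (length x - 2)) (last x)"
    using dr s ub unfolding diagonal_rule_def by blast
  moreover have "1 \<le> gdist E (x ! (length x - 2)) (last x)"
  proof (rule gdist_pos)
    have su: "successively (\<noteq>) x" and sv: "set x \<subseteq> V" using s(1) by (auto simp: is_seq_succ)
    show "x ! (length x - 2) \<in> V" using sv s(2) by auto
    have "x \<noteq> []" using s(2) by auto
    then show "last x \<in> V" using sv last_in_set by blast
    have "x ! (length x - 2) \<noteq> x ! Suc (length x - 2)" using successively_nth[OF su, of "length x - 2"] s(2) by simp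
    moreover have "Suc (length x - 2) = length x - 1" using s(2) by simp
    ultimately show "x ! (length x - 2) \<noteq> last x" using s(2) by (subst last_conv_nth) auto
  qed
  ultimately show ?thesis by simp
qed

lemma crit_len: "is_seq V x \<Longrightarrow> unmatched M x \<Longrightarrow> sl E x = length x - 1"
proof (induction "length x" arbitrary: x)
  case 0
  then show ?case by (simp add: is_seq_def)
next
  case (Suc n)
  show ?case
  proof (cases "n = 0")
    case True
    then obtain y where "x = [y]" using Suc.hyps by (cases x) auto
    then show ?thesis by simp
  next
    case False
    then have l2: "2 \<le> length x" using Suc.hyps by simp
    have x: "x = butlast x @ [last x]" using Suc.prems by (simp add: is_seq_def)
    have ne: "butlast x \<noteq> []" using l2 by (cases x) auto
    have ih: "sl E (butlast x) = length (butlast x) - 1"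
      using Suc.hyps(1)[of "butlast x"] Suc.hyps(2) butlast_seq[OF Suc.prems(1) l2] crit_prefix[OF Suc.prems(1) l2 Suc.prems(2)]
      by simp
    have "last (butlast x) = x ! (length x - 2)" using l2 ne
      by (simp add: last_conv_nth nth_butlast numeral_2_eq_2)
    then have "sl E x = sl E (butlast x) + 1"
      using sl_snoc[OF ne, where y="last x" and E=E] x crit_last[OF Suc.prems(1) l2 Suc.prems(2)] by simp
    then show ?thesis using ih l2 ne by simp
  qed
qed

lemma all_matched: "x \<in> Iseq V E k l \<Longrightarrow> k \<noteq> l \<Longrightarrow> \<not> unmatched M x"
  using crit_len by (auto simp: Iseq_def seq_len_sl)

abbreviation "R \<equiv> (Gamma_M V E M)\<^sup>+"

lemma acyc: "acyclic (Gamma_M V E M)" using mm by (simp add: morse_matching_def)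

lemma R_irrefl: "(x, x) \<notin> R" using acyc by (simp add: acyclic_def)

lemma R_M: "(a, b) \<in> M \<Longrightarrow> (b, a) \<in> R"
  by (auto simp: Gamma_M_def)

lemma R_G: "is_seq V x \<Longrightarrow> face_ok E i x \<Longrightarrow> (x, del_at i x) \<notin> M \<Longrightarrow> (x, del_at i x) \<in> R"
  by (rule r_into_trancl) (auto simp: Gamma_M_def Gamma_def)


definition Up :: "nat \<Rightarrow> nat \<Rightarrow> 'a list set" where
  "Up k l = {a \<in> Iseq V E k l. \<exists>b. (b, a) \<in> M}"

lemma step1:
  assumes "A \<subseteq> Up k l" "\<forall>y\<in>A. \<forall>z\<in>Up k l. (y, z) \<in> R \<longrightarrow> z \<in> A"
    "is_chain V E k l c" "\<forall>x\<in>Up k l. c x \<noteq> 0 \<longrightarrow> x \<in> A"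
  shows "\<exists>b. is_chain V E (Suc k) l b \<and> (\<forall>x\<in>Up k l. c x = bdry V E (Suc k) l b x)"
  using assms
proof (induction "card A" arbitrary: A c rule: less_induct)
  case less
  have "Up k l \<subseteq> Iseq V E k l" by (auto simp: Up_def)
  then have finA: "finite A" using less.prems(1) finite_Iseq[of k l]
    by (meson finite_subset subset_trans)
  show ?case
  proof (cases "A = {}")
    case True
    then show ?thesis using less.prems(4)
      by (intro exI[of _ "\<lambda>_. 0"]) (auto simp: bdry_zero is_chain_def)
  next
    case False
    obtain a where a: "a \<in> A" "\<forall>y\<in>A. (y, a) \<notin> R" using min_elem[OF finA False acyc] by blast
    have aU: "a \<in> Up k l" using a less.prems(1) by blast
    then obtain p where pa: "(p, a) \<in> M" and aI: "a \<in> Iseq V E k l" by (auto simp: Up_def)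
    obtain i where i: "is_seq V p" "face_ok E i p" "a = del_at i p" using M_Gamma[OF pa] by blast
    have li: "i < length p" using i by (auto simp: face_ok_def)
    have pI: "p \<in> Iseq V E (Suc k) l"
      using i li aI by (auto simp: Iseq_def face_ok_def)
    have eps: "coef E (Suc k) p a = (-1) ^ i"
      using coef_face[OF i(1) _ i(2)] pI i(3) by (simp add: Iseq_def)
    have ee: "coef E (Suc k) p a * coef E (Suc k) p a = 1"
      unfolding eps by (simp add: power_mult_distrib[symmetric])
    define t where "t = c a * coef E (Suc k) p a"
    define c1 where "c1 = (\<lambda>x. c x - t * coef E (Suc k) p x)"
    have c1a: "c1 a = 0" unfolding c1_def t_def using ee by (simp add: mult.assoc)
    have A'card: "card (A - {a}) < card A" using finA a(1) by (meson card_Diff1_less)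
    have p1: "A - {a} \<subseteq> Up k l" using less.prems(1) by blast
    have p2: "\<forall>y\<in>A - {a}. \<forall>z\<in>Up k l. (y, z) \<in> R \<longrightarrow> z \<in> A - {a}"
      using less.prems(2) a by blast
    have p3: "is_chain V E k l c1"
      unfolding is_chain_def
    proof (intro allI impI)
      fix x assume "c1 x \<noteq> 0"
      then have "c x \<noteq> 0 \<or> coef E (Suc k) p x \<noteq> 0" unfolding c1_def by auto
      then show "x \<in> Iseq V E k l"
      proof
        assume "c x \<noteq> 0" then show ?thesis using less.prems(3) by (simp add: is_chain_def)
      next
        assume "coef E (Suc k) p x \<noteq> 0"
        then obtain i' where "face_ok E i' p" "del_at i' p = x" using coef_nz by blast
        then show ?thesis using del_Iseq[OF pI] by blast
      qed
    qed
    have p4: "\<forall>x\<in>Up k l. c1 x \<noteq> 0 \<longrightarrow> x \<in> A - {a}"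
    proof (intro ballI impI)
      fix x assume xU: "x \<in> Up k l" and nz: "c1 x \<noteq> 0"
      then have xa: "x \<noteq> a" using c1a by auto
      from nz have "c x \<noteq> 0 \<or> coef E (Suc k) p x \<noteq> 0" unfolding c1_def by auto
      then have "x \<in> A"
      proof
        assume "c x \<noteq> 0" then show ?thesis using less.prems(4) xU by blast
      next
        assume "coef E (Suc k) p x \<noteq> 0"
        then obtain i' where i': "face_ok E i' p" "del_at i' p = x" using coef_nz by blast
        have "(p, x) \<notin> M"
        proof
          assume "(p, x) \<in> M"
          then show False using M_disj[OF pa] xa by blast
        qed
        then have "(p, x) \<in> R" using R_G[OF i(1) i'(1)] i'(2) by simp
        moreover have "(a, p) \<in> R" using R_M[OF pa] .
        ultimately have "(a, x) \<in> R" by simp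
        then show ?thesis using less.prems(2) a(1) xU by blast
      qed
      then show "x \<in> A - {a}" using xa by blast
    qed
    obtain b1 where b1: "is_chain V E (Suc k) l b1" "\<forall>x\<in>Up k l. c1 x = bdry V E (Suc k) l b1 x"
      using less.hyps[OF A'card p1 p2 p3 p4] by blast
    define b where "b = (\<lambda>x. b1 x + (if x = p then t else 0))"
    have "is_chain V E (Suc k) l b" using b1(1) pI unfolding b_def is_chain_def by auto
    moreover have "\<forall>x\<in>Up k l. c x = bdry V E (Suc k) l b x"
      unfolding b_def bdry_add_single[OF pI] using b1(2) unfolding c1_def by auto
    ultimately show ?thesis by blast
  qed
qed

lemma step2:
  assumes nc: "\<forall>x\<in>Iseq V E k l. \<not> unmatched M x" and ch: "is_chain V E k l c"
    and cy: "bdry V E k l c = (\<lambda>_. 0)" and up: "\<forall>x\<in>Up k l. c x = 0"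
  shows "c = (\<lambda>_. 0)"
proof (rule ccontr)
  assume "c \<noteq> (\<lambda>_. 0)"
  let ?D = "{x \<in> Iseq V E k l. c x \<noteq> 0}"
  have "?D \<noteq> {}" using \<open>c \<noteq> (\<lambda>_. 0)\<close> ch unfolding is_chain_def by auto
  moreover have "finite ?D" using finite_Iseq by simp
  ultimately obtain a where a: "a \<in> ?D" "\<forall>y\<in>?D. (y, a) \<notin> R" using min_elem[OF _ _ acyc] by blast
  have "\<not> unmatched M a" using nc a(1) by blast
  moreover have "\<not> (\<exists>b. (b, a) \<in> M)" using up a(1) by (auto simp: Up_def)
  ultimately obtain a' where aa': "(a, a') \<in> M" unfolding unmatched_def by blast
  obtain i where i: "is_seq V a" "face_ok E i a" "a' = del_at i a" using M_Gamma[OF aa'] by blast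
  have la: "length a = Suc k" using a(1) by (simp add: Iseq_def)
  have eps: "coef E k a a' = (-1) ^ i" using coef_face[OF i(1) la i(2)] i(3) by simp
  have "bdry V E k l c a' = (\<Sum>x\<in>Iseq V E k l. if x = a then c a * coef E k a a' else 0)"
    unfolding bdry_coef
  proof (rule sum.cong[OF refl])
    fix x assume xI: "x \<in> Iseq V E k l"
    show "c x * coef E k x a' = (if x = a then c a * coef E k a a' else 0)"
    proof (cases "x = a")
      case False
      show ?thesis
      proof (rule ccontr)
        assume "\<not> ?thesis"
        then have cx: "c x \<noteq> 0" and cf: "coef E k x a' \<noteq> 0" using False by auto
        then obtain i' where i': "face_ok E i' x" "del_at i' x = a'" using coef_nz by blast
        have xs: "is_seq V x" using xI by (simp add: Iseq_def)
        have "(x, a') \<notin> M"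
        proof
          assume "(x, a') \<in> M"
          then show False using M_disj[OF aa'] False by blast
        qed
        then have "(x, a') \<in> R" using R_G[OF xs i'(1)] i'(2) by simp
        moreover have "(a', a) \<in> R" using R_M[OF aa'] .
        ultimately have "(x, a) \<in> R" by simp
        then show False using a(2) xI cx by blast
      qed
    qed simp
  qed
  also have "\<dots> = c a * coef E k a a'" using a(1) finite_Iseq by simp
  finally have "bdry V E k l c a' = c a * (-1) ^ i" using eps by simp
  moreover have "c a * (-1) ^ i \<noteq> 0" using a(1) by simp
  ultimately show False using cy by (metis)
qed

theorem diag: "diagonal_graph V E"
  unfolding diagonal_graph_def MH_vanishes_def
proof (intro allI impI)
  fix k l c
  assume kl: "k \<noteq> l" and c: "is_chain V E k l c \<and> bdry V E k l c = (\<lambda>_. 0)"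
  have nc: "\<forall>x\<in>Iseq V E k l. \<not> unmatched M x" using all_matched kl by blast
  obtain b where b: "is_chain V E (Suc k) l b" "\<forall>x\<in>Up k l. c x = bdry V E (Suc k) l b x"
    using step1[of "Up k l" k l c] c by blast
  define c1 where "c1 = (\<lambda>x. c x - bdry V E (Suc k) l b x)"
  have ch1: "is_chain V E k l c1"
    unfolding is_chain_def
  proof (intro allI impI)
    fix xs assume "c1 xs \<noteq> 0"
    then have "c xs \<noteq> 0 \<or> bdry V E (Suc k) l b xs \<noteq> 0" unfolding c1_def by auto
    then show "xs \<in> Iseq V E k l" using c bdry_supp by (auto simp: is_chain_def)
  qed
  have cy1: "bdry V E k l c1 = (\<lambda>_. 0)"
    unfolding c1_def bdry_diff dd_zero using c by simp
  have "c1 = (\<lambda>_. 0)" using step2[OF nc ch1 cy1] b(2) unfolding c1_def by simp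
  then have "bdry V E (Suc k) l b = c" unfolding c1_def by (auto simp: fun_eq_iff)
  then show "\<exists>b. is_chain V E (Suc k) l b \<and> bdry V E (Suc k) l b = c" using b(1) by blast
qed

end

theorem corollary3p6:
  fixes V :: "'a set" and E :: "'a \<Rightarrow> 'a \<Rightarrow> bool"
    and F :: "'a list \<Rightarrow> 'a rule_val" and M :: "('a list \<times> 'a list) set"
  assumes "simple_graph V E" and "connected_graph V E"
    and "diagonal_rule V E F M"
    and "prefix_matching V E M" and "generated_by V F M"
    and "morse_matching V E M"
  shows "diagonal_graph V E"
proof -
  interpret Morse V E F M using assms by unfold_locales
  show ?thesis by (rule diag)
qed

end
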